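(* Let $\mathcal{H}=\mathcal{H}_1\otimes\mathcal{H}_2\otimes\mathcal{H}_3$ with $\dim\mathcal{H}_i=d_i$ and let $U\in SU(d_1d_2d_3)$ act on $\mathcal{H}$. Then $\epsilon_1(U)=\frac13[\epsilon_{12|3}(U)+\epsilon_{13|2}(U)+\epsilon_{23|1}(U)]$, and for each $ab|c\in\{12|3,13|2,23|1\}$, $$\epsilon_{ab|c}(U)=2\left[1-\Bigg(\prod_{i=1}^3\frac{d_i}{d_i+1}\Bigg)\sum_{x'|y'}\operatorname{tr}\big[(\operatorname{tr}_{abx'}|U\rangle\langle U|)^2\big]\right],$$ where the sum runs over all eight ordered bipartitions $x'|y'$ of $\{1',2',3'\}$, i.e. $x'|y'\in\{1'2'3'|\cdot,\ 1'2'|3',\ 1'3'|2',\ 2'3'|1',\ 1'|2'3',\ 2'|1'3',\ 3'|1'2',\ \cdot|1'2'3'\}$ (a dot denoting the empty set), and $\operatorname{tr}_{abx'}$ denotes the partial trace over the factors $\mathcal{H}_a,\mathcal{H}_b$ and $\mathcal{H}_{i'}$ for $i'\in x'$.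
   Context: Let $\mathcal{H}'=\mathcal{H}_{1'}\otimes\mathcal{H}_{2'}\otimes\mathcal{H}_{3'}$ be a copy of $\mathcal{H}$ with $\dim\mathcal{H}_{i'}=d_i$. Given orthonormal bases, the state associated with $U$ is $|U\rangle=\frac{1}{\sqrt{d_1d_2d_3}}\sum \langle j_1j_2j_3|U|j_{1'}j_{2'}j_{3'}\rangle\,|j_1j_2j_3\rangle\otimes|j_{1'}j_{2'}j_{3'}\rangle\in\mathcal{H}\otimes\mathcal{H}'$ (sum over all indices). For a pure state $|\psi\rangle\in\mathcal{H}$ and a bipartition $g|g'$ of $\{1,2,3\}$, $\tau_{g|g'}(|\psi\rangle)=2\big(1-\operatorname{tr}[(\operatorname{tr}_g|\psi\rangle\langle\psi|)^2]\big)$; the one-tangle is $\tau_1=\frac13(\tau_{12|3}+\tau_{13|2}+\tau_{23|1})$. $\epsilon_{ab|c}(U)$ (resp. $\epsilon_1(U)$) is the average of $\tau_{ab|c}(U|\psi_{\rm sep}\rangle)$ (resp. $\tau_1(U|\psi_{\rm sep}\rangle)$) over $|\psi_{\rm sep}\rangle=|\psi_1\rangle\otimes|\psi_2\rangle\otimes|\psi_3\rangle$, each $|\psi_i\rangle$ drawn independently from the unitarily invariant measure on pure states of $\mathcal{H}_i$. *)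

theory Defs
  imports "HOL-Analysis.Analysis" "HOL-Probability.Probability"
begin

text \<open>Hilbert spaces: H_i = complex^'i with orthonormal (standard) basis indexed by the
finite type 'i, so d_i = CARD('i).  The tripartite space H = H_1 (x) H_2 (x) H_3 has basis
indexed by 'a \<times> 'b \<times> 'c; operators on H are matrices complex^('a\<times>'b\<times>'c)^('a\<times>'b\<times>'c).\<close>

definition adjoint_mat :: "complex^'n^'m \<Rightarrow> complex^'m^'n" where
  "adjoint_mat A = (\<chi> i j. cnj (A $ j $ i))"

definition unitary_mat :: "complex^'n^'n \<Rightarrow> bool" where
  "unitary_mat A \<longleftrightarrow> A ** adjoint_mat A = mat 1 \<and> adjoint_mat A ** A = mat 1"

definition special_unitary :: "complex^'n^'n \<Rightarrow> bool" where
  "special_unitary A \<longleftrightarrow> unitary_mat A \<and> det A = 1"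

definition unitarily_invariant_state_measure :: "(complex^'n) measure \<Rightarrow> bool" where
  "unitarily_invariant_state_measure M \<longleftrightarrow>
     prob_space M \<and> sets M = sets borel \<and> emeasure M (sphere 0 1) = 1 \<and>
     (\<forall>V. unitary_mat V \<longrightarrow> distr M borel (\<lambda>\<psi>. V *v \<psi>) = M)"

fun sel3 :: "nat set \<Rightarrow> 'x \<times> 'y \<times> 'z \<Rightarrow> 'x \<times> 'y \<times> 'z \<Rightarrow> 'x \<times> 'y \<times> 'z" where
  "sel3 K (a, b, c) (a', b', c') =
     (if 1 \<in> K then a else a', if 2 \<in> K then b else b', if 3 \<in> K then c else c')"

text \<open>Six parties 1,2,3,1',2',3': K are the kept unprimed parties, K' the kept primed ones
(both as subsets of {1,2,3}).\<close>

fun sel6 :: "nat set \<Rightarrow> nat set \<Rightarrow> ('x \<times> 'y \<times> 'z) \<times> ('u \<times> 'v \<times> 'w)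
              \<Rightarrow> ('x \<times> 'y \<times> 'z) \<times> ('u \<times> 'v \<times> 'w) \<Rightarrow> ('x \<times> 'y \<times> 'z) \<times> ('u \<times> 'v \<times> 'w)" where
  "sel6 K K' (x, x') (y, y') = (sel3 K x y, sel3 K' x' y')"

text \<open>Reduced density matrix of the pure state psi (coefficients in the product basis) on the
kept parties, entries indexed by the kept part of basis indices (the traced coordinates being
fixed to a dummy value), obtained by partial trace over the remaining parties; and its purity
tr[rho^2].\<close>

definition reduced_dm :: "('i::finite \<Rightarrow> 'i \<Rightarrow> 'i) \<Rightarrow> ('i \<Rightarrow> complex) \<Rightarrow> 'i \<Rightarrow> 'i \<Rightarrow> complex" where
  "reduced_dm sel \<psi> k k' =
     (\<Sum>s\<in>range (\<lambda>i. sel undefined i). \<psi> (sel k s) * cnj (\<psi> (sel k' s)))"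

definition purity :: "('i::finite \<Rightarrow> 'i \<Rightarrow> 'i) \<Rightarrow> ('i \<Rightarrow> complex) \<Rightarrow> complex" where
  "purity sel \<psi> =
     (\<Sum>k\<in>range (\<lambda>i. sel i undefined). \<Sum>k'\<in>range (\<lambda>i. sel i undefined).
        reduced_dm sel \<psi> k k' * reduced_dm sel \<psi> k' k)"

text \<open>tau_{g|g'}(psi) = 2(1 - tr[(tr_g |psi><psi|)^2]) for g \<subseteq> {1,2,3}; the purity is real,
we take its real part.\<close>

definition tau :: "nat set \<Rightarrow> ('a::finite \<times> 'b::finite \<times> 'c::finite \<Rightarrow> complex) \<Rightarrow> real" where
  "tau g \<psi> = 2 * (1 - Re (purity (sel3 ({1,2,3} - g)) \<psi>))"

definition one_tangle :: "('a::finite \<times> 'b::finite \<times> 'c::finite \<Rightarrow> complex) \<Rightarrow> real" where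
  "one_tangle \<psi> = (tau {1,2} \<psi> + tau {1,3} \<psi> + tau {2,3} \<psi>) / 3"

definition apply_prod ::
  "complex^('a::finite \<times> 'b::finite \<times> 'c::finite)^('a \<times> 'b \<times> 'c)
     \<Rightarrow> complex^'a \<Rightarrow> complex^'b \<Rightarrow> complex^'c \<Rightarrow> ('a \<times> 'b \<times> 'c \<Rightarrow> complex)" where
  "apply_prod U \<psi>1 \<psi>2 \<psi>3 =
     (\<lambda>j. (U *v (\<chi> j. \<psi>1 $ fst j * \<psi>2 $ fst (snd j) * \<psi>3 $ snd (snd j))) $ j)"

definition ent_power ::
  "(complex^'a) measure \<Rightarrow> (complex^'b) measure \<Rightarrow> (complex^'c) measure \<Rightarrow> nat set
     \<Rightarrow> complex^('a::finite \<times> 'b::finite \<times> 'c::finite)^('a \<times> 'b \<times> 'c) \<Rightarrow> real" where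
  "ent_power M1 M2 M3 g U =
     (\<integral>(\<psi>1, \<psi>2, \<psi>3). tau g (apply_prod U \<psi>1 \<psi>2 \<psi>3) \<partial>(M1 \<Otimes>\<^sub>M (M2 \<Otimes>\<^sub>M M3)))"

definition ent_power1 ::
  "(complex^'a) measure \<Rightarrow> (complex^'b) measure \<Rightarrow> (complex^'c) measure
     \<Rightarrow> complex^('a::finite \<times> 'b::finite \<times> 'c::finite)^('a \<times> 'b \<times> 'c) \<Rightarrow> real" where
  "ent_power1 M1 M2 M3 U =
     (\<integral>(\<psi>1, \<psi>2, \<psi>3). one_tangle (apply_prod U \<psi>1 \<psi>2 \<psi>3) \<partial>(M1 \<Otimes>\<^sub>M (M2 \<Otimes>\<^sub>M M3)))"

text \<open>The state |U> in H (x) H' with coefficients <j1 j2 j3|U|j1' j2' j3'> / sqrt(d1 d2 d3).\<close>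

definition choi_state ::
  "complex^('a::finite \<times> 'b::finite \<times> 'c::finite)^('a \<times> 'b \<times> 'c)
     \<Rightarrow> ('a \<times> 'b \<times> 'c) \<times> ('a \<times> 'b \<times> 'c) \<Rightarrow> complex" where
  "choi_state U = (\<lambda>(j, j'). U $ j $ j' / complex_of_real (sqrt (real (CARD('a) * CARD('b) * CARD('c)))))"

end

theory Submission
  imports Defs
begin

locale selop =
  fixes sel :: "'i::finite \<Rightarrow> 'i \<Rightarrow> 'i"
  assumes s1: "\<And>a b c. sel (sel a b) c = sel a c"
    and s2: "\<And>a b c. sel a (sel b c) = sel a c"
    and s3: "\<And>a. sel a a = a"
begin

lemma reidx:
  "(\<Sum>k\<in>range (\<lambda>i. sel i undefined). \<Sum>s\<in>range (\<lambda>i. sel undefined i). G k s)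
   = (\<Sum>x\<in>UNIV. G (sel x undefined) (sel undefined x))"
proof -
  let ?A = "range (\<lambda>i. sel i undefined)" and ?B = "range (\<lambda>i. sel undefined i)"
  have "(\<Sum>k\<in>?A. \<Sum>s\<in>?B. G k s) = (\<Sum>p\<in>?A \<times> ?B. G (fst p) (snd p))"
    by (simp add: sum.cartesian_product split_def)
  also have "\<dots> = (\<Sum>x\<in>UNIV. G (sel x undefined) (sel undefined x))"
  proof (rule sum.reindex_bij_witness[where i = "\<lambda>x. (sel x undefined, sel undefined x)"
        and j = "\<lambda>p. sel (fst p) (snd p)"])
    fix p assume "p \<in> ?A \<times> ?B"
    then obtain i j where p: "p = (sel i undefined, sel undefined j)" by auto
    show "(sel (sel (fst p) (snd p)) undefined, sel undefined (sel (fst p) (snd p))) = p"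
      using p by (simp add: s1 s2)
    show "G (sel (sel (fst p) (snd p)) undefined) (sel undefined (sel (fst p) (snd p))) =
         G (fst p) (snd p)"
      using p by (simp add: s1 s2)
  qed (auto simp: s1 s2 s3)
  finally show ?thesis .
qed

lemma purity_alt:
  "purity sel \<psi> = (\<Sum>x\<in>UNIV. \<Sum>y\<in>UNIV. \<psi> x * cnj (\<psi> (sel y x)) * \<psi> y * cnj (\<psi> (sel x y)))"
proof -
  let ?A = "range (\<lambda>i. sel i undefined)" and ?B = "range (\<lambda>i. sel undefined i)"
  have "purity sel \<psi> = (\<Sum>k\<in>?A. \<Sum>k'\<in>?A. \<Sum>s\<in>?B. \<Sum>s'\<in>?B.
          \<psi> (sel k s) * cnj (\<psi> (sel k' s)) * (\<psi> (sel k' s') * cnj (\<psi> (sel k s'))))"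
    unfolding purity_def reduced_dm_def by (simp add: sum_product)
  also have "\<dots> = (\<Sum>k\<in>?A. \<Sum>s\<in>?B. \<Sum>k'\<in>?A. \<Sum>s'\<in>?B.
          \<psi> (sel k s) * cnj (\<psi> (sel k' s)) * (\<psi> (sel k' s') * cnj (\<psi> (sel k s'))))"
    by (rule sum.cong[OF refl], rule sum.swap)
  also have "\<dots> = (\<Sum>x\<in>UNIV. \<Sum>y\<in>UNIV.
          \<psi> (sel (sel x undefined) (sel undefined x)) * cnj (\<psi> (sel (sel y undefined) (sel undefined x)))
          * (\<psi> (sel (sel y undefined) (sel undefined y)) * cnj (\<psi> (sel (sel x undefined) (sel undefined y)))))"
    by (simp add: reidx)
  also have "\<dots> = (\<Sum>x\<in>UNIV. \<Sum>y\<in>UNIV. \<psi> x * cnj (\<psi> (sel y x)) * \<psi> y * cnj (\<psi> (sel x y)))"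
    by (simp add: s1 s2 s3 mult.assoc)
  finally show ?thesis .
qed
end

lemma selop_sel3: "selop (sel3 K :: ('x::finite \<times> 'y::finite \<times> 'z::finite) \<Rightarrow> _)"
  by unfold_locales (auto simp: split_paired_all)

lemma selop_sel6: "selop (sel6 K K' :: (('x::finite \<times> 'y::finite \<times> 'z::finite) \<times> ('u::finite \<times> 'v::finite \<times> 'w::finite)) \<Rightarrow> _)"
  by unfold_locales (auto simp: split_paired_all)

lemma uism_prob: "unitarily_invariant_state_measure M \<Longrightarrow> prob_space M"
  by (simp add: unitarily_invariant_state_measure_def)

lemma uism_sets: "unitarily_invariant_state_measure M \<Longrightarrow> sets M = sets borel"
  by (simp add: unitarily_invariant_state_measure_def)

lemma uism_AE: assumes "unitarily_invariant_state_measure M"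
  shows "AE x in M. norm x = 1"
proof -
  have p: "prob_space M" using assms by (simp add: unitarily_invariant_state_measure_def)
  have "emeasure M (sphere 0 1) = 1" using assms by (simp add: unitarily_invariant_state_measure_def)
  then have "measure M (sphere 0 1) = 1" by (simp add: measure_def)
  from prob_space.AE_prob_1[OF p this] show ?thesis by simp
qed

lemma uism_integrable:
  fixes f :: "complex^'n \<Rightarrow> 'b::{banach,second_countable_topology}"
  assumes "unitarily_invariant_state_measure M" "continuous_on UNIV f"
  shows "integrable M f"
proof -
  have p: "prob_space M" using assms(1) by (rule uism_prob)
  have "compact (f ` sphere 0 1)"
    by (rule compact_continuous_image[OF continuous_on_subset[OF assms(2)]]) auto
  then obtain B where B: "\<And>x. x \<in> sphere 0 1 \<Longrightarrow> norm (f x) \<le> B"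
    using compact_imp_bounded bounded_iff by (metis imageI)
  have "AE x in M. norm (f x) \<le> B"
    using uism_AE[OF assms(1)] by eventually_elim (auto intro!: B)
  moreover have "f \<in> borel_measurable M"
    using borel_measurable_continuous_onI[OF assms(2)] measurable_cong_sets[OF uism_sets[OF assms(1)] refl]
    by blast
  ultimately show ?thesis
    using finite_measure.integrable_const_bound[of M f B] p prob_space.finite_measure by blast
qed

lemma uism_inv:
  fixes f :: "complex^'n \<Rightarrow> 'b::{banach,second_countable_topology}"
  assumes "unitarily_invariant_state_measure M" "unitary_mat V" "f \<in> borel_measurable borel"
  shows "integral\<^sup>L M f = integral\<^sup>L M (\<lambda>x. f (V *v x))"
proof -
  have d: "distr M borel (\<lambda>\<psi>. V *v \<psi>) = M"
    using assms(1,2) by (simp add: unitarily_invariant_state_measure_def)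
  have g: "(\<lambda>\<psi>. V *v \<psi>) \<in> measurable M borel"
    using borel_measurable_continuous_onI[OF matrix_vector_mult_linear_continuous_on[of UNIV V]]
      measurable_cong_sets[OF uism_sets[OF assms(1)] refl] by blast
  have "integral\<^sup>L M f = integral\<^sup>L (distr M borel (\<lambda>\<psi>. V *v \<psi>)) f" using d by simp
  also have "\<dots> = integral\<^sup>L M (\<lambda>x. f (V *v x))" by (rule integral_distr[OF g assms(3)])
  finally show ?thesis .
qed

definition mon :: "'n \<Rightarrow> 'n \<Rightarrow> 'n \<Rightarrow> 'n \<Rightarrow> complex^'n \<Rightarrow> complex" where
  "mon i j k l \<psi> = \<psi>$i * cnj (\<psi>$j) * \<psi>$k * cnj (\<psi>$l)"

definition mom :: "(complex^'n) measure \<Rightarrow> 'n \<Rightarrow> 'n \<Rightarrow> 'n \<Rightarrow> 'n \<Rightarrow> complex" where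
  "mom M i j k l = integral\<^sup>L M (mon i j k l)"

lemma mon_cont: "continuous_on UNIV (mon i j k l)"
  unfolding mon_def by (intro continuous_intros)

lemma mon_meas: "mon i j k l \<in> borel_measurable borel"
  by (rule borel_measurable_continuous_onI[OF mon_cont])

lemma mmult_nth: "((A::complex^'n::finite^'m) ** B) $ i $ j = (\<Sum>k\<in>UNIV. A $ i $ k * B $ k $ j)"
  by (simp add: matrix_matrix_mult_def)

lemma adj_nth: "adjoint_mat A $ i $ j = cnj (A $ j $ i)"
  by (simp add: adjoint_mat_def)

lemma mat1_nth: "(mat 1 :: complex^'n^'n) $ i $ j = (if i = j then 1 else 0)"
  by (simp add: mat_def)

lemma mvmult_nth: "((A::complex^'n::finite^'m) *v x) $ i = (\<Sum>j\<in>UNIV. A $ i $ j * x $ j)"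
  by (simp add: matrix_vector_mult_def)

definition diagm :: "('n::finite \<Rightarrow> complex) \<Rightarrow> complex^'n^'n" where
  "diagm w = (\<chi> i j. if i = j then w i else 0)"

lemma diagm_unitary: assumes "\<And>j. w j * cnj (w j) = 1" shows "unitary_mat (diagm w)"
proof -
  have a: "(diagm w ** adjoint_mat (diagm w)) $ i $ j = (if i = j then 1 else 0)" for i j
  proof -
    have "(diagm w ** adjoint_mat (diagm w)) $ i $ j =
       (\<Sum>k\<in>UNIV. (if k = i then w i * cnj (if j = k then w j else 0) else 0))"
      unfolding mmult_nth adj_nth diagm_def by (intro sum.cong) auto
    also have "\<dots> = w i * cnj (if j = i then w j else 0)" by simp
    finally show ?thesis using assms by auto
  qed
  have b: "(adjoint_mat (diagm w) ** diagm w) $ i $ j = (if i = j then 1 else 0)" for i j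
  proof -
    have "(adjoint_mat (diagm w) ** diagm w) $ i $ j =
       (\<Sum>k\<in>UNIV. (if k = i then cnj (w i) * (if k = j then w j else 0) else 0))"
      unfolding mmult_nth adj_nth diagm_def by (intro sum.cong) auto
    also have "\<dots> = cnj (w i) * (if i = j then w j else 0)" by simp
    finally show ?thesis using assms by (auto simp: mult.commute)
  qed
  show ?thesis unfolding unitary_mat_def using a b by (simp add: vec_eq_iff mat1_nth)
qed

lemma diagm_mult: "(diagm w *v \<psi>) $ i = w i * \<psi> $ i"
proof -
  have "(diagm w *v \<psi>) $ i = (\<Sum>k\<in>UNIV. if k = i then w i * \<psi> $ i else 0)"
    unfolding mvmult_nth diagm_def by (intro sum.cong) auto
  then show ?thesis by simp
qed

definition pm :: "('n::finite \<Rightarrow> 'n) \<Rightarrow> complex^'n^'n" where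
  "pm p = (\<chi> i j. if j = p i then 1 else 0)"

lemma pm_unitary: assumes inv: "\<And>k. p (p k) = k" shows "unitary_mat (pm p)"
proof -
  have a: "(pm p ** adjoint_mat (pm p)) $ i $ j = (if i = j then 1 else 0)" for i j
  proof -
    have "(pm p ** adjoint_mat (pm p)) $ i $ j =
       (\<Sum>k\<in>UNIV. (if k = p i then (if k = p j then 1 else 0) else 0))"
      unfolding mmult_nth adj_nth pm_def by (intro sum.cong) auto
    also have "\<dots> = (if p i = p j then 1 else 0)" by simp
    finally show ?thesis using inv by (metis)
  qed
  have b: "(adjoint_mat (pm p) ** pm p) $ i $ j = (if i = j then 1 else 0)" for i j
  proof -
    have "(adjoint_mat (pm p) ** pm p) $ i $ j =
       (\<Sum>k\<in>UNIV. (if k = p i then (if j = p k then 1 else 0) else 0))"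
      unfolding mmult_nth adj_nth pm_def by (intro sum.cong) (auto simp: inv)
    also have "\<dots> = (if j = p (p i) then 1 else 0)" by simp
    finally show ?thesis using inv by simp
  qed
  show ?thesis unfolding unitary_mat_def using a b by (simp add: vec_eq_iff mat1_nth)
qed

lemma pm_mult: "(pm p *v \<psi>) $ i = \<psi> $ p i"
proof -
  have "(pm p *v \<psi>) $ i = (\<Sum>k\<in>UNIV. if k = p i then \<psi> $ p i else 0)"
    unfolding mvmult_nth pm_def by (intro sum.cong) auto
  then show ?thesis by simp
qed

lemma sum_split2: assumes "a \<noteq> b"
  shows "(\<Sum>k\<in>(UNIV::'n::finite set). f k) = f a + f b + (\<Sum>k\<in>UNIV-{a,b}. f k)"
proof -
  have "(\<Sum>k\<in>(UNIV::'n set). f k) = f a + (\<Sum>k\<in>UNIV-{a}. f k)"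
    by (rule sum.remove) auto
  also have "(\<Sum>k\<in>UNIV-{a}. f k) = f b + (\<Sum>k\<in>UNIV-{a}-{b}. f k)"
    by (rule sum.remove) (use assms in auto)
  also have "UNIV-{a}-{b} = UNIV-{a,b}" by auto
  finally show ?thesis by (simp add: add.assoc)
qed

definition hr :: complex where "hr = complex_of_real (1 / sqrt 2)"

lemma hr_sq: "hr * hr = 1/2"
proof -
  have "hr * hr = complex_of_real ((1 / sqrt 2) * (1 / sqrt 2))" by (simp only: hr_def of_real_mult)
  also have "(1 / sqrt 2) * (1 / sqrt 2) = (1/2::real)" by (simp add: field_simps)
  finally show ?thesis by simp
qed

lemma cnj_hr: "cnj hr = hr" by (simp add: hr_def)

definition hh :: "'n \<Rightarrow> 'n \<Rightarrow> 'n \<Rightarrow> 'n \<Rightarrow> complex" where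
  "hh a b i j = (if i \<in> {a,b} \<and> j \<in> {a,b} then (if i = b \<and> j = b then - hr else hr)
                else if i = j then 1 else 0)"

definition had :: "'n::finite \<Rightarrow> 'n \<Rightarrow> complex^'n^'n" where
  "had a b = (\<chi> i j. hh a b i j)"

lemma hh_sym: "hh a b i j = hh a b j i" by (auto simp: hh_def)
lemma hh_cnj: "cnj (hh a b i j) = hh a b i j" by (auto simp: hh_def cnj_hr)

lemma hh_sq: fixes a b :: "'n::finite" assumes "a \<noteq> b"
  shows "(\<Sum>k\<in>UNIV. hh a b i k * hh a b k j) = (if i = j then 1 else 0)"
proof -
  have r: "(\<Sum>k\<in>UNIV-{a,b}. hh a b i k * hh a b k j) =
     (\<Sum>k\<in>UNIV-{a,b}. if k = i then (if i = j then 1 else 0) else 0)"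
    by (intro sum.cong) (auto simp: hh_def)
  have "(\<Sum>k\<in>UNIV. hh a b i k * hh a b k j) = hh a b i a * hh a b a j + hh a b i b * hh a b b j
     + (if i \<in> UNIV-{a,b} then (if i = j then 1 else 0) else 0)"
    unfolding sum_split2[OF assms] r by simp
  then show ?thesis using assms by (auto simp: hh_def hr_sq)
qed

lemma had_unitary: assumes "a \<noteq> b" shows "unitary_mat (had a b)"
proof -
  have e: "adjoint_mat (had a b) = had a b"
    unfolding adjoint_mat_def had_def by (simp add: vec_eq_iff hh_cnj hh_sym)
  have "had a b ** had a b = mat 1"
    unfolding vec_eq_iff mmult_nth mat1_nth by (simp add: had_def hh_sq[OF assms])
  then show ?thesis unfolding unitary_mat_def e by simp
qed

lemma had_mult: fixes a b :: "'n::finite" assumes "a \<noteq> b" shows "(had a b *v \<psi>) $ a = hr * (\<psi> $ a + \<psi> $ b)"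
proof -
  have r: "(\<Sum>k\<in>UNIV-{a,b}. hh a b a k * \<psi> $ k) = 0"
    by (intro sum.neutral) (auto simp: hh_def)
  show ?thesis unfolding mvmult_nth had_def vec_lambda_beta sum_split2[OF assms] r
    using assms by (simp add: hh_def algebra_simps)
qed

lemma key_bool:
  fixes A B m :: complex
  assumes "m = (if P1 \<and> P2 then A else if P1 \<or> P2 then B else 0)" "A = 2 * B"
  shows "m = (of_bool P1 + of_bool P2) * B"
  using assms by (cases P1; cases P2) simp_all
lemma key_aux:
  fixes A B :: complex
  assumes st: "m = (if i = j \<and> k = l \<and> i = k then A else if i = j \<and> k = l \<or> i = l \<and> k = j then B else 0)"
    and AB: "A = 2 * B"
  shows "m = (of_bool (i = j \<and> k = l) + of_bool (i = l \<and> k = j)) * B"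
proof -
  have "(i = j \<and> k = l \<and> i = k) = ((i = j \<and> k = l) \<and> (i = l \<and> k = j))" by blast
  then have "m = (if (i = j \<and> k = l) \<and> (i = l \<and> k = j) then A else if (i = j \<and> k = l) \<or> (i = l \<and> k = j) then B else 0)"
    using st by simp
  then show ?thesis by (rule key_bool[OF _ AB])
qed

context
  fixes M :: "(complex^'n::finite) measure"
  assumes U: "unitarily_invariant_state_measure M"
begin

lemma mom_inv: "unitary_mat V \<Longrightarrow> mom M i j k l = integral\<^sup>L M (\<lambda>x. mon i j k l (V *v x))"
  unfolding mom_def by (rule uism_inv[OF U _ mon_meas])

lemma mon_int: "integrable M (mon i j k l)"
  by (rule uism_integrable[OF U mon_cont])

lemma mom_phase:
  assumes "\<And>j. w j * cnj (w j) = 1"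
  shows "mom M i j k l = (w i * cnj (w j) * w k * cnj (w l)) * mom M i j k l"
proof -
  have "mom M i j k l = integral\<^sup>L M (\<lambda>x. mon i j k l (diagm w *v x))"
    by (rule mom_inv[OF diagm_unitary[OF assms]])
  also have "\<dots> = integral\<^sup>L M (\<lambda>x. (w i * cnj (w j) * w k * cnj (w l)) * mon i j k l x)"
    by (simp add: mon_def diagm_mult mult_ac)
  also have "\<dots> = (w i * cnj (w j) * w k * cnj (w l)) * mom M i j k l"
    by (simp add: mom_def)
  finally show ?thesis .
qed

lemma mom_vanish:
  assumes "\<not> (i = j \<and> k = l \<or> i = l \<and> k = j)"
  shows "mom M i j k l = 0"
proof -
  define w where "w = (\<lambda>j0 (x::'n). if x = j0 then \<i> else 1)"
  have wu: "\<And>j0 x. w j0 x * cnj (w j0 x) = 1" by (simp add: w_def)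
  have "\<exists>j0. w j0 i * cnj (w j0 j) * w j0 k * cnj (w j0 l) \<noteq> 1"
  proof (rule ccontr)
    assume "\<not> ?thesis"
    then have h: "\<And>j0. w j0 i * cnj (w j0 j) * w j0 k * cnj (w j0 l) = 1" by blast
    from h[of i] h[of j] h[of k] h[of l] assms show False
      by (auto simp: w_def split: if_splits)
  qed
  then obtain j0 where "w j0 i * cnj (w j0 j) * w j0 k * cnj (w j0 l) \<noteq> 1" by blast
  moreover have "mom M i j k l = (w j0 i * cnj (w j0 j) * w j0 k * cnj (w j0 l)) * mom M i j k l"
    by (rule mom_phase) (rule wu)
  ultimately show ?thesis
    by (metis mult_cancel_right2)
qed

lemma mom_perm:
  assumes "\<And>k. p (p k) = k"
  shows "mom M i j k l = mom M (p i) (p j) (p k) (p l)"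
proof -
  have "mom M i j k l = integral\<^sup>L M (\<lambda>x. mon i j k l (pm p *v x))"
    by (rule mom_inv[OF pm_unitary[OF assms]])
  also have "\<dots> = mom M (p i) (p j) (p k) (p l)"
    unfolding mom_def by (simp add: mon_def[abs_def] pm_mult)
  finally show ?thesis .
qed

definition tr :: "'n \<Rightarrow> 'n \<Rightarrow> 'n \<Rightarrow> 'n" where
  "tr x y k = (if k = x then y else if k = y then x else k)"

lemma tr_inv: "tr x y (tr x y k) = k" by (simp add: tr_def)

lemma mom_sym1: "mom M i j k l = mom M k j i l"
  unfolding mom_def mon_def by (simp add: mult_ac)

lemma mom_sym2: "mom M i j k l = mom M i l k j"
  unfolding mom_def mon_def by (simp add: mult_ac)

lemma mom_diag: "mom M i i i i = mom M a a a a"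
  using mom_perm[of "tr i a" i i i i, OF tr_inv] by (simp add: tr_def)

lemma mom_off: assumes "i \<noteq> k" "a \<noteq> b" shows "mom M i i k k = mom M a a b b"
proof -
  define k1 where "k1 = tr i a k"
  have "mom M i i k k = mom M a a k1 k1"
    using mom_perm[of "tr i a" i i k k, OF tr_inv] by (simp add: tr_def k1_def)
  also have "k1 \<noteq> a" using assms by (auto simp: k1_def tr_def)
  then have "mom M a a k1 k1 = mom M a a b b"
    using mom_perm[of "tr k1 b", OF tr_inv, of a a k1 k1] assms by (auto simp: tr_def)
  finally show ?thesis .
qed

lemma sum_norm_sq: "norm (x::complex^'n) = 1 \<Longrightarrow> (\<Sum>i\<in>UNIV. x$i * cnj (x$i)) = 1"
proof -
  assume n: "norm x = 1"
  have "(\<Sum>i\<in>UNIV. x$i * cnj (x$i)) = complex_of_real (\<Sum>i\<in>UNIV. (norm (x$i))^2)"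
    by (simp add: complex_norm_square del: of_real_power)
  also have "(\<Sum>i\<in>UNIV. (norm (x$i))^2) = (norm x)^2"
    unfolding norm_vec_def L2_set_def by (simp add: sum_nonneg)
  finally show ?thesis using n by simp
qed

lemma mom_norm: "(\<Sum>i\<in>UNIV. \<Sum>j\<in>UNIV. mom M i i j j) = 1"
proof -
  have p: "prob_space M" by (rule uism_prob[OF U])
  have "(\<Sum>i\<in>UNIV. \<Sum>j\<in>UNIV. mom M i i j j) = integral\<^sup>L M (\<lambda>x. \<Sum>i\<in>UNIV. \<Sum>j\<in>UNIV. mon i i j j x)"
    by (simp add: integral_sum integrable_sum mon_int mom_def)
  also have "\<dots> = integral\<^sup>L M (\<lambda>x. 1)"
  proof (rule integral_cong_AE)
    show "(\<lambda>x. \<Sum>i\<in>UNIV. \<Sum>j\<in>UNIV. mon i i j j x) \<in> borel_measurable M"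
      by (rule borel_measurable_integrable) (simp add: integrable_sum mon_int)
    show "(\<lambda>x. 1::complex) \<in> borel_measurable M" by simp
    show "AE x in M. (\<Sum>i\<in>UNIV. \<Sum>j\<in>UNIV. mon i i j j x) = 1"
      using uism_AE[OF U]
    proof eventually_elim
      case (elim x)
      have "(\<Sum>i\<in>UNIV. \<Sum>j\<in>UNIV. mon i i j j x) =
          (\<Sum>i\<in>UNIV. x$i * cnj (x$i)) * (\<Sum>j\<in>UNIV. x$j * cnj (x$j))"
        by (simp add: mon_def sum_product mult_ac)
      then show ?case using sum_norm_sq[OF elim] by simp
    qed
  qed
  also have "\<dots> = 1" using p by (simp add: prob_space.prob_space)
  finally show ?thesis .
qed

lemma mom_had: fixes a b :: 'n assumes ab: "a \<noteq> b"
  shows "mom M a a a a = hr * hr * (hr * hr) *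
     (\<Sum>i\<in>{a,b}. \<Sum>j\<in>{a,b}. \<Sum>k\<in>{a,b}. \<Sum>l\<in>{a,b}. mom M i j k l)"
proof -
  have "mom M a a a a = integral\<^sup>L M (\<lambda>x. mon a a a a (had a b *v x))"
    by (rule mom_inv[OF had_unitary[OF ab]])
  also have "\<dots> = integral\<^sup>L M (\<lambda>x. hr * hr * (hr * hr) *
     (\<Sum>i\<in>{a,b}. \<Sum>j\<in>{a,b}. \<Sum>k\<in>{a,b}. \<Sum>l\<in>{a,b}. mon i j k l x))"
    by (rule Bochner_Integration.integral_cong[OF refl])
       (simp add: mon_def had_mult[OF ab] cnj_hr ab algebra_simps)
  also have "\<dots> = hr * hr * (hr * hr) *
     (\<Sum>i\<in>{a,b}. \<Sum>j\<in>{a,b}. \<Sum>k\<in>{a,b}. \<Sum>l\<in>{a,b}. mom M i j k l)"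
    by (simp only: integral_mult_right_zero)
       (simp add: integral_sum integrable_sum mon_int mom_def del: sum.insert)
  finally show ?thesis .
qed

lemma mom_struct: assumes ab: "a \<noteq> b"
  shows "mom M i j k l = (if i = j \<and> k = l \<and> i = k then mom M a a a a
     else if i = j \<and> k = l \<or> i = l \<and> k = j then mom M a a b b else 0)"
proof (cases "i = j \<and> k = l \<and> i = k")
  case True
  then have "j = i" "k = i" "l = i" by auto
  then show ?thesis using mom_diag[of i a] by simp
next
  case F: False
  show ?thesis
  proof (cases "i = j \<and> k = l")
    case True then show ?thesis using F mom_off[of i k a b] ab by auto
  next
    case F2: False
    show ?thesis
    proof (cases "i = l \<and> k = j")
      case True then show ?thesis using F F2 mom_off[of i k a b] ab mom_sym2[of i j k l] by auto
    next
      case False then show ?thesis using F F2 mom_vanish[of i j k l] by auto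
    qed
  qed
qed

lemma mom_formula:
  "mom M i j k l = (of_bool (i = j \<and> k = l) + of_bool (i = l \<and> k = j)) /
     (of_nat CARD('n) * (of_nat CARD('n) + 1))"
proof (cases "CARD('n) = 1")
  case True
  then obtain a :: 'n where U1: "UNIV = {a}" using card_1_singletonE by blast
  then have all: "\<And>x::'n. x = a" by auto
  have "mom M a a a a = 1" using mom_norm[unfolded U1] by simp
  then show ?thesis using True all[of i] all[of j] all[of k] all[of l] by simp
next
  case False
  obtain a :: 'n where True by blast
  have "UNIV \<noteq> {a}"
  proof
    assume h: "UNIV = {a}"
    have "card (UNIV::'n set) = card {a}" by (subst h) (rule refl)
    with False show False by simp
  qed
  then obtain b :: 'n where "b \<noteq> a" by blast
  then have ab: "a \<noteq> b" by simp
  define A where "A = mom M a a a a"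
  define B where "B = mom M a a b b"
  have st: "\<And>i j k l. mom M i j k l = (if i = j \<and> k = l \<and> i = k then A
     else if i = j \<and> k = l \<or> i = l \<and> k = j then B else 0)"
    unfolding A_def B_def by (rule mom_struct[OF ab])
  have h4: "hr * hr * (hr * hr) = 1/4" by (simp add: hr_sq)
  have s2: "\<And>f. (\<Sum>i\<in>{a,b}. f i) = f a + f b" using ab by simp
  have "A = 1/4 * (A + B + B + B + B + A)"
    using mom_had[OF ab] unfolding h4 s2 A_def[symmetric] apply (simp only: st)
    using ab by (simp add: eq_commute[of b a])
  then have AB: "A = 2 * B" by simp
  define d where "d = CARD('n)"
  have inner: "(\<Sum>j\<in>UNIV. if i = j then A else B) = of_nat d * B + (A - B)" for i :: 'n
  proof -
    have "(\<Sum>j\<in>UNIV. if i = j then A else B) = (\<Sum>j\<in>UNIV. B + (if i = j then A - B else 0))"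
      by (intro sum.cong) auto
    also have "\<dots> = of_nat d * B + (A - B)" by (simp add: sum.distrib d_def)
    finally show ?thesis .
  qed
  have "1 = (\<Sum>i\<in>UNIV. \<Sum>j\<in>UNIV. mom M i i j j)" using mom_norm by simp
  also have "\<dots> = (\<Sum>i\<in>UNIV. \<Sum>j\<in>UNIV. if (i::'n) = j then A else B)"
    by (rule sum.cong[OF refl], rule sum.cong[OF refl]) (auto simp: st)
  also have "\<dots> = of_nat d * (of_nat d * B + (A - B))" by (simp add: inner d_def)
  finally have "of_nat d * (of_nat d + 1) * B = 1" using AB by (simp add: algebra_simps)
  moreover have "d > 0" unfolding d_def by (simp add: card_gt_0_iff)
  then have Dnz: "(of_nat d * (of_nat d + 1) :: complex) \<noteq> 0"
  proof -
    have e: "(of_nat d * (of_nat d + 1) :: complex) = of_nat (d * (d + 1))" by (simp add: algebra_simps)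
    have "d * (d + 1) \<noteq> 0" using \<open>d > 0\<close> by simp
    then show ?thesis unfolding e by (simp only: of_nat_eq_0_iff not_False_eq_True)
  qed
  ultimately have Bv: "B = 1 / (of_nat d * (of_nat d + 1))"
    by (simp add: eq_divide_eq mult.commute)
  define D where "D = (of_nat d * (of_nat d + 1) :: complex)"
  have key: "mom M i j k l = (of_bool (i = j \<and> k = l) + of_bool (i = l \<and> k = j)) * B"
    by (rule key_aux[OF st AB])
  show ?thesis unfolding key Bv d_def by simp
qed

end

definition good :: "('x::{real_normed_vector,second_countable_topology}) measure \<Rightarrow> 'x set \<Rightarrow> bool" where
  "good M S \<longleftrightarrow> prob_space M \<and> sets M = sets borel \<and> compact S \<and> (AE x in M. x \<in> S)"

lemma good_uism: "unitarily_invariant_state_measure M \<Longrightarrow> good M (sphere 0 1)"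
  unfolding good_def using uism_prob uism_sets uism_AE by fastforce

lemma good_pair:
  fixes M :: "('x::{real_normed_vector,second_countable_topology}) measure"
    and N :: "('y::{real_normed_vector,second_countable_topology}) measure"
  assumes "good M S" "good N T" shows "good (M \<Otimes>\<^sub>M N) (S \<times> T)"
proof -
  have pM: "prob_space M" and pN: "prob_space N" using assms by (auto simp: good_def)
  have sM: "sets M = sets borel" and sN: "sets N = sets borel" using assms by (auto simp: good_def)
  have "sets (M \<Otimes>\<^sub>M N) = sets (borel \<Otimes>\<^sub>M borel)" by (rule sets_pair_measure_cong[OF sM sN])
  also have "(borel \<Otimes>\<^sub>M borel) = (borel :: ('x \<times> 'y) measure)" by (rule borel_prod)
  finally have sP: "sets (M \<Otimes>\<^sub>M N) = sets borel" .
  have cS: "compact S" and cT: "compact T" using assms by (auto simp: good_def)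
  interpret pair_sigma_finite M N
    by (intro pair_sigma_finite.intro prob_space_imp_sigma_finite pM pN)
  have meas: "{x\<in>space (M \<Otimes>\<^sub>M N). x \<in> S \<times> T} \<in> sets (M \<Otimes>\<^sub>M N)"
  proof -
    have "closed (S \<times> T)" using cS cT by (intro closed_Times compact_imp_closed)
    then have "S \<times> T \<in> sets borel" by simp
    moreover have "space (M \<Otimes>\<^sub>M N) = UNIV" using sets_eq_imp_space_eq[OF sP] by simp
    ultimately show ?thesis using sP by simp
  qed
  have aeS: "AE x in M. x \<in> S" and aeT: "AE y in N. y \<in> T" using assms by (auto simp: good_def)
  have "AE x in M. AE y in N. (x, y) \<in> S \<times> T"
    using aeS by eventually_elim (use aeT in \<open>auto elim: AE_mp\<close>)
  then have "AE x in M \<Otimes>\<^sub>M N. x \<in> S \<times> T" by (rule AE_pair_measure[OF meas])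
  then show ?thesis unfolding good_def
    using prob_space_pair[OF pM pN] sP compact_Times[OF cS cT] by simp
qed

lemma good_integrable:
  fixes f :: "'x::{real_normed_vector,second_countable_topology} \<Rightarrow> 'b::{banach,second_countable_topology}"
  assumes "good M S" "continuous_on UNIV f"
  shows "integrable M f"
proof -
  have p: "prob_space M" and sM: "sets M = sets borel" and cS: "compact S" and ae: "AE x in M. x \<in> S"
    using assms(1) by (auto simp: good_def)
  have "compact (f ` S)"
    by (rule compact_continuous_image[OF continuous_on_subset[OF assms(2)] cS]) auto
  then obtain B where B: "\<And>x. x \<in> S \<Longrightarrow> norm (f x) \<le> B"
    using compact_imp_bounded bounded_iff by (metis imageI)
  have "AE x in M. norm (f x) \<le> B"
    using ae by eventually_elim (auto intro!: B)
  moreover have "f \<in> borel_measurable M"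
    using borel_measurable_continuous_onI[OF assms(2)] measurable_cong_sets[OF sM refl]
    by blast
  ultimately show ?thesis
    using finite_measure.integrable_const_bound[of M f B] p prob_space.finite_measure by blast
qed

lemma good_integral_prod:
  fixes M :: "('x::{real_normed_vector,second_countable_topology}) measure"
    and N :: "('y::{real_normed_vector,second_countable_topology}) measure"
    and f :: "'x \<Rightarrow> complex" and g :: "'y \<Rightarrow> complex"
  assumes "good M S" "good N T" "continuous_on UNIV f" "continuous_on UNIV g"
  shows "integral\<^sup>L (M \<Otimes>\<^sub>M N) (\<lambda>p. f (fst p) * g (snd p)) = integral\<^sup>L M f * integral\<^sup>L N g"
proof -
  have pM: "prob_space M" and pN: "prob_space N" using assms by (auto simp: good_def)
  interpret pair_sigma_finite M N
    by (intro pair_sigma_finite.intro prob_space_imp_sigma_finite pM pN)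
  have c: "continuous_on UNIV (\<lambda>p::'x \<times> 'y. f (fst p) * g (snd p))"
    by (intro continuous_intros continuous_on_compose2[OF assms(3)] continuous_on_compose2[OF assms(4)]) auto
  have i: "integrable (M \<Otimes>\<^sub>M N) (\<lambda>p. f (fst p) * g (snd p))"
    by (rule good_integrable[OF good_pair[OF assms(1,2)] c])
  have "integral\<^sup>L (M \<Otimes>\<^sub>M N) (\<lambda>p. f (fst p) * g (snd p)) = (\<integral>x. (\<integral>y. f x * g y \<partial>N) \<partial>M)"
    using integral_fst'[OF i] by simp
  also have "\<dots> = integral\<^sup>L M f * integral\<^sup>L N g" by simp
  finally show ?thesis .
qed

definition pv :: "(complex^'a::finite) \<times> (complex^'b::finite) \<times> (complex^'c::finite) \<Rightarrow> 'a \<times> 'b \<times> 'c \<Rightarrow> complex" where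
  "pv p m = fst p $ fst m * fst (snd p) $ fst (snd m) * snd (snd p) $ snd (snd m)"

definition Cf :: "complex^('a::finite \<times> 'b::finite \<times> 'c::finite)^('a \<times> 'b \<times> 'c) \<Rightarrow> nat set \<Rightarrow>
   'a \<times> 'b \<times> 'c \<Rightarrow> 'a \<times> 'b \<times> 'c \<Rightarrow> 'a \<times> 'b \<times> 'c \<Rightarrow> 'a \<times> 'b \<times> 'c \<Rightarrow> 'a \<times> 'b \<times> 'c \<Rightarrow> 'a \<times> 'b \<times> 'c \<Rightarrow> complex" where
  "Cf U K x y m1 m2 m3 m4 = U$x$m1 * cnj (U$(sel3 K y x)$m2) * U$y$m3 * cnj (U$(sel3 K x y)$m4)"

lemma apply_prod_eq: "apply_prod U \<psi>1 \<psi>2 \<psi>3 x = (\<Sum>m\<in>UNIV. U$x$m * pv (\<psi>1, \<psi>2, \<psi>3) m)"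
  unfolding apply_prod_def pv_def by (simp add: matrix_vector_mult_def)

lemma expand4:
  "(\<Sum>a\<in>A. f a) * cnj (\<Sum>b\<in>B. g b) * (\<Sum>c\<in>C. h c) * cnj (\<Sum>e\<in>E. k e) =
   (\<Sum>a\<in>A. \<Sum>c\<in>C. \<Sum>b\<in>B. \<Sum>e\<in>E. f a * cnj (g b) * h c * cnj (k e))"
proof -
  have "(\<Sum>a\<in>A. f a) * cnj (\<Sum>b\<in>B. g b) * (\<Sum>c\<in>C. h c) * cnj (\<Sum>e\<in>E. k e) =
   (\<Sum>a\<in>A. \<Sum>c\<in>C. \<Sum>b\<in>B. \<Sum>e\<in>E. f a * h c * (cnj (g b) * cnj (k e)))"
  proof -
    have "(\<Sum>a\<in>A. f a) * cnj (\<Sum>b\<in>B. g b) * (\<Sum>c\<in>C. h c) * cnj (\<Sum>e\<in>E. k e) =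
      ((\<Sum>a\<in>A. f a) * (\<Sum>c\<in>C. h c)) * ((\<Sum>b\<in>B. cnj (g b)) * (\<Sum>e\<in>E. cnj (k e)))"
      by (simp add: cnj_sum mult_ac)
    also have "\<dots> = (\<Sum>a\<in>A. \<Sum>c\<in>C. f a * h c) * (\<Sum>b\<in>B. \<Sum>e\<in>E. cnj (g b) * cnj (k e))"
      by (simp only: sum_product)
    also have "\<dots> = (\<Sum>a\<in>A. \<Sum>c\<in>C. \<Sum>b\<in>B. \<Sum>e\<in>E. f a * h c * (cnj (g b) * cnj (k e)))"
      by (simp only: sum_distrib_right) (simp only: sum_distrib_left)
    finally show ?thesis .
  qed
  then show ?thesis by (simp add: mult_ac)
qed

definition Pexp where
  "Pexp U K p = (\<Sum>x\<in>UNIV. \<Sum>y\<in>UNIV. \<Sum>m1\<in>UNIV. \<Sum>m3\<in>UNIV. \<Sum>m2\<in>UNIV. \<Sum>m4\<in>UNIV.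
      Cf U K x y m1 m2 m3 m4 * (pv p m1 * cnj (pv p m2) * pv p m3 * cnj (pv p m4)))"

lemma pur_exp: "purity (sel3 K) (apply_prod U \<psi>1 \<psi>2 \<psi>3) = Pexp U K (\<psi>1, \<psi>2, \<psi>3)"
proof -
  interpret selop "sel3 K :: ('a \<times> 'b \<times> 'c) \<Rightarrow> _" by (rule selop_sel3)
  show ?thesis
    unfolding purity_alt apply_prod_eq expand4 Pexp_def Cf_def
    by (simp add: mult_ac)
qed

lemma Pexp_cont: "continuous_on UNIV (Pexp U K)"
  unfolding Pexp_def pv_def by (intro continuous_intros)

definition W :: "(complex^'a::finite) measure \<Rightarrow> (complex^'b::finite) measure \<Rightarrow> (complex^'c::finite) measure \<Rightarrow>
   'a \<times> 'b \<times> 'c \<Rightarrow> 'a \<times> 'b \<times> 'c \<Rightarrow> 'a \<times> 'b \<times> 'c \<Rightarrow> 'a \<times> 'b \<times> 'c \<Rightarrow> complex" where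
  "W M1 M2 M3 m1 m2 m3 m4 = mom M1 (fst m1) (fst m2) (fst m3) (fst m4) *
     (mom M2 (fst (snd m1)) (fst (snd m2)) (fst (snd m3)) (fst (snd m4)) *
      mom M3 (snd (snd m1)) (snd (snd m2)) (snd (snd m3)) (snd (snd m4)))"

context
  fixes M1 :: "(complex^'a::finite) measure" and M2 :: "(complex^'b::finite) measure"
    and M3 :: "(complex^'c::finite) measure"
  assumes U1: "unitarily_invariant_state_measure M1"
    and U2: "unitarily_invariant_state_measure M2"
    and U3: "unitarily_invariant_state_measure M3"
begin

lemma goodP: "good (M1 \<Otimes>\<^sub>M (M2 \<Otimes>\<^sub>M M3)) (sphere 0 1 \<times> (sphere 0 1 \<times> sphere 0 1))"
  by (intro good_pair good_uism U1 U2 U3)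

lemma Q_int: "integrable (M1 \<Otimes>\<^sub>M (M2 \<Otimes>\<^sub>M M3)) (\<lambda>p. pv p m1 * cnj (pv p m2) * pv p m3 * cnj (pv p m4))"
  by (rule good_integrable[OF goodP]) (unfold pv_def, intro continuous_intros)

lemma EQ: "integral\<^sup>L (M1 \<Otimes>\<^sub>M (M2 \<Otimes>\<^sub>M M3)) (\<lambda>p. pv p m1 * cnj (pv p m2) * pv p m3 * cnj (pv p m4))
   = W M1 M2 M3 m1 m2 m3 m4"
proof -
  have e: "(\<lambda>p. pv p m1 * cnj (pv p m2) * pv p m3 * cnj (pv p m4)) =
    (\<lambda>p. mon (fst m1) (fst m2) (fst m3) (fst m4) (fst p) *
      (\<lambda>q. mon (fst (snd m1)) (fst (snd m2)) (fst (snd m3)) (fst (snd m4)) (fst q) *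
            mon (snd (snd m1)) (snd (snd m2)) (snd (snd m3)) (snd (snd m4)) (snd q)) (snd p))"
    by (rule ext) (simp add: pv_def mon_def mult_ac)
  have c2: "continuous_on UNIV (\<lambda>q::(complex^'b) \<times> (complex^'c).
     mon (fst (snd m1)) (fst (snd m2)) (fst (snd m3)) (fst (snd m4)) (fst q) *
     mon (snd (snd m1)) (snd (snd m2)) (snd (snd m3)) (snd (snd m4)) (snd q))"
    unfolding mon_def by (intro continuous_intros)
  show ?thesis
    unfolding e
    apply (subst good_integral_prod[OF good_uism[OF U1] good_pair[OF good_uism[OF U2] good_uism[OF U3]] mon_cont c2])
    apply (subst good_integral_prod[OF good_uism[OF U2] good_uism[OF U3] mon_cont mon_cont])
    apply (simp add: W_def mom_def)
    done
qed

lemma E_Pexp: "integral\<^sup>L (M1 \<Otimes>\<^sub>M (M2 \<Otimes>\<^sub>M M3)) (Pexp U K) =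
  (\<Sum>x\<in>UNIV. \<Sum>y\<in>UNIV. \<Sum>m1\<in>UNIV. \<Sum>m3\<in>UNIV. \<Sum>m2\<in>UNIV. \<Sum>m4\<in>UNIV.
      Cf U K x y m1 m2 m3 m4 * W M1 M2 M3 m1 m2 m3 m4)"
  unfolding Pexp_def
  by (simp add: integral_sum integrable_sum Q_int EQ del: integral_mult_right integral_mult_right_zero)

end

definition Dn :: "nat \<Rightarrow> complex" where "Dn d = of_nat d * (of_nat d + 1)"

lemma sel3_expl: "sel3 K (a, b, c) (a', b', c') =
   (if 1 \<in> K then a else a', if 2 \<in> K then b else b', if 3 \<in> K then c else c')"
  by simp

lemma ob_tuple: "(of_bool ((x2, y2, z2) = (x, y, z) \<and> (x4, y4, z4) = (x', y', z')) :: complex) =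
  of_bool (x2 = x \<and> x4 = x') * (of_bool (y2 = y \<and> y4 = y') * of_bool (z2 = z \<and> z4 = z'))"
  by (simp only: prod.inject of_bool_conj) (simp only: mult_ac)
lemma coord: "(if P then of_bool (x1 = x2 \<and> x3 = x4) else of_bool (x1 = x4 \<and> x3 = x2)) =
  (of_bool (x2 = (if \<not> P then x3 else x1) \<and> x4 = (if \<not> P then x1 else x3)) :: complex)"
proof (cases P)
  case True
  have "(x1 = x2 \<and> x3 = x4) = (x2 = x1 \<and> x4 = x3)" by blast
  then show ?thesis using True by simp
next
  case False
  have "(x1 = x4 \<and> x3 = x2) = (x2 = x3 \<and> x4 = x1)" by blast
  then show ?thesis using False by simp
qed

lemma delta3:
  fixes a1 a2 a3 a4 :: 'a and b1 b2 b3 b4 :: 'b and c1 c2 c3 c4 :: 'c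
  shows "((of_bool (a1 = a2 \<and> a3 = a4) + of_bool (a1 = a4 \<and> a3 = a2)) *
         ((of_bool (b1 = b2 \<and> b3 = b4) + of_bool (b1 = b4 \<and> b3 = b2)) *
          (of_bool (c1 = c2 \<and> c3 = c4) + of_bool (c1 = c4 \<and> c3 = c2))) :: complex)
   = (\<Sum>B\<in>Pow {1,2,3::nat}. of_bool ((a2, b2, c2) = sel3 ({1,2,3} - B) (a3, b3, c3) (a1, b1, c1) \<and>
                                    (a4, b4, c4) = sel3 ({1,2,3} - B) (a1, b1, c1) (a3, b3, c3)))"
proof -
  define al :: "nat \<Rightarrow> complex" where "al = (\<lambda>i. if i = 1 then of_bool (a1 = a2 \<and> a3 = a4)
     else if i = 2 then of_bool (b1 = b2 \<and> b3 = b4) else of_bool (c1 = c2 \<and> c3 = c4))"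
  define be :: "nat \<Rightarrow> complex" where "be = (\<lambda>i. if i = 1 then of_bool (a1 = a4 \<and> a3 = a2)
     else if i = 2 then of_bool (b1 = b4 \<and> b3 = b2) else of_bool (c1 = c4 \<and> c3 = c2))"
  have "((of_bool (a1 = a2 \<and> a3 = a4) + of_bool (a1 = a4 \<and> a3 = a2)) *
         ((of_bool (b1 = b2 \<and> b3 = b4) + of_bool (b1 = b4 \<and> b3 = b2)) *
          (of_bool (c1 = c2 \<and> c3 = c4) + of_bool (c1 = c4 \<and> c3 = c2))) :: complex)
     = (\<Prod>i\<in>{1,2,3::nat}. al i + be i)"
    by (simp add: al_def be_def)
  also have "\<dots> = (\<Sum>B\<in>Pow {1,2,3::nat}. (\<Prod>i\<in>B. al i) * (\<Prod>i\<in>{1,2,3}-B. be i))"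
    by (rule prod_add) simp
  also have "\<dots> = (\<Sum>B\<in>Pow {1,2,3::nat}. of_bool ((a2, b2, c2) = sel3 ({1,2,3} - B) (a3, b3, c3) (a1, b1, c1) \<and>
                                    (a4, b4, c4) = sel3 ({1,2,3} - B) (a1, b1, c1) (a3, b3, c3)))"
  proof (rule sum.cong[OF refl])
    fix B assume "B \<in> Pow {1,2,3::nat}"
    then have Bs: "B \<subseteq> {1,2,3}" by simp
    have "(\<Prod>i\<in>B. al i) * (\<Prod>i\<in>{1,2,3}-B. be i) = (\<Prod>i\<in>{1,2,3::nat}. if i \<in> B then al i else be i)"
    proof -
      have "(\<Prod>i\<in>{1,2,3::nat}. if i \<in> B then al i else be i) =
         (\<Prod>i\<in>{1,2,3} \<inter> {x. x \<in> B}. al i) * (\<Prod>i\<in>{1,2,3} \<inter> - {x. x \<in> B}. be i)"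
        by (rule prod.If_cases) simp
      also have "{1,2,3} \<inter> {x. x \<in> B} = B" using Bs by auto
      also have "{1,2,3} \<inter> - {x. x \<in> B} = {1,2,3} - B" by auto
      finally show ?thesis by simp
    qed
    also have "\<dots> = (if 1 \<in> B then al 1 else be 1) * ((if 2 \<in> B then al 2 else be 2) * (if 3 \<in> B then al 3 else be 3))"
      by simp
    also have "\<dots> = of_bool ((a2, b2, c2) = sel3 ({1,2,3} - B) (a3, b3, c3) (a1, b1, c1) \<and>
                                    (a4, b4, c4) = sel3 ({1,2,3} - B) (a1, b1, c1) (a3, b3, c3))"
    proof -
      have m1: "(1 \<in> {1,2,3::nat} - B) = (1 \<notin> B)" and m2: "(2 \<in> {1,2,3::nat} - B) = (2 \<notin> B)"
        and m3: "(3 \<in> {1,2,3::nat} - B) = (3 \<notin> B)" by auto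
      have a1: "al 1 = of_bool (a1 = a2 \<and> a3 = a4)" "be 1 = of_bool (a1 = a4 \<and> a3 = a2)"
        and a2: "al 2 = of_bool (b1 = b2 \<and> b3 = b4)" "be 2 = of_bool (b1 = b4 \<and> b3 = b2)"
        and a3: "al 3 = of_bool (c1 = c2 \<and> c3 = c4)" "be 3 = of_bool (c1 = c4 \<and> c3 = c2)"
        by (simp_all add: al_def be_def)
      show ?thesis
        unfolding sel3_expl ob_tuple
        unfolding a1 a2 a3 coord by (simp only: m1 m2 m3)
    qed
    finally show "(\<Prod>i\<in>B. al i) * (\<Prod>i\<in>{1,2,3}-B. be i) = \<dots>" .
  qed
  finally show ?thesis .
qed

lemma ob_if: "(g::complex) * (c * of_bool (P \<and> Q)) = c * (if P then if Q then g else 0 else 0)"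
  by (cases P; cases Q) simp_all

lemma dd: "(\<Sum>m2\<in>(UNIV::'m::finite set). \<Sum>m4\<in>(UNIV::'n::finite set). if m2 = X then if m4 = Y then H m2 m4 else 0 else (0::complex)) = H X Y"
proof -
  have "\<And>m2. (\<Sum>m4\<in>(UNIV::'n set). if m2 = X then if m4 = Y then H m2 m4 else 0 else (0::complex)) = (if m2 = X then H m2 Y else 0)"
    by (case_tac "m2 = X") simp_all
  then show ?thesis by simp
qed

lemma sum_delta2:
  fixes G :: "'m::finite \<Rightarrow> 'm \<Rightarrow> complex"
  assumes "finite S"
  shows "(\<Sum>m2\<in>UNIV. \<Sum>m4\<in>UNIV. G m2 m4 * (cc * (\<Sum>b\<in>S. of_bool (m2 = X b \<and> m4 = Y b))))
     = cc * (\<Sum>b\<in>S. G (X b) (Y b))"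
proof -
  have "(\<Sum>m2\<in>UNIV. \<Sum>m4\<in>UNIV. G m2 m4 * (cc * (\<Sum>b\<in>S. of_bool (m2 = X b \<and> m4 = Y b))))
     = (\<Sum>m2\<in>UNIV. \<Sum>m4\<in>UNIV. \<Sum>b\<in>S. cc * (if m2 = X b then (if m4 = Y b then G m2 m4 else 0) else 0))"
    unfolding sum_distrib_left by (intro sum.cong refl) (rule ob_if)
  also have "\<dots> = (\<Sum>b\<in>S. \<Sum>m2\<in>UNIV. \<Sum>m4\<in>UNIV. cc * (if m2 = X b then (if m4 = Y b then G m2 m4 else 0) else 0))"
    apply (subst sum.swap[of _ UNIV S, symmetric])
    apply (rule sum.swap)
    done
  also have "\<dots> = (\<Sum>b\<in>S. cc * G (X b) (Y b))"
  proof (rule sum.cong[OF refl])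
    fix b
    have "(\<Sum>m2\<in>UNIV. \<Sum>m4\<in>UNIV. cc * (if m2 = X b then (if m4 = Y b then G m2 m4 else 0) else 0))
      = (\<Sum>m2\<in>UNIV. \<Sum>m4\<in>UNIV. (if m2 = X b then (if m4 = Y b then cc * G m2 m4 else 0) else 0))"
      by (intro sum.cong refl) simp
    also have "\<dots> = cc * G (X b) (Y b)" by (rule dd)
    finally show "(\<Sum>m2\<in>UNIV. \<Sum>m4\<in>UNIV. cc * (if m2 = X b then (if m4 = Y b then G m2 m4 else 0) else 0))
      = cc * G (X b) (Y b)" .
  qed
  finally show ?thesis by (simp add: sum_distrib_left)
qed

lemma div4: assumes "cnj s = s"
  shows "a / s * cnj (b / s) * (c / s) * cnj (e / s) = 1 / (s * s * (s * s)) * (a * cnj b * c * cnj e)"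
  by (simp add: assms complex_cnj_divide)

lemma swap5: "(\<Sum>x\<in>A. \<Sum>y\<in>B. \<Sum>m1\<in>C. \<Sum>m3\<in>D. \<Sum>b\<in>S. F x y m1 m3 b) =
   (\<Sum>b\<in>S. \<Sum>x\<in>A. \<Sum>m1\<in>C. \<Sum>y\<in>B. \<Sum>m3\<in>D. F x y m1 m3 b)"
proof -
  have 1: "\<And>x y m1. (\<Sum>m3\<in>D. \<Sum>b\<in>S. F x y m1 m3 b) = (\<Sum>b\<in>S. \<Sum>m3\<in>D. F x y m1 m3 b)"
    by (rule sum.swap)
  have 2: "\<And>x y. (\<Sum>m1\<in>C. \<Sum>b\<in>S. \<Sum>m3\<in>D. F x y m1 m3 b) = (\<Sum>b\<in>S. \<Sum>m1\<in>C. \<Sum>m3\<in>D. F x y m1 m3 b)"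
    by (rule sum.swap)
  have 3: "\<And>x. (\<Sum>y\<in>B. \<Sum>b\<in>S. \<Sum>m1\<in>C. \<Sum>m3\<in>D. F x y m1 m3 b) = (\<Sum>b\<in>S. \<Sum>y\<in>B. \<Sum>m1\<in>C. \<Sum>m3\<in>D. F x y m1 m3 b)"
    by (rule sum.swap)
  have 4: "(\<Sum>x\<in>A. \<Sum>b\<in>S. \<Sum>y\<in>B. \<Sum>m1\<in>C. \<Sum>m3\<in>D. F x y m1 m3 b) = (\<Sum>b\<in>S. \<Sum>x\<in>A. \<Sum>y\<in>B. \<Sum>m1\<in>C. \<Sum>m3\<in>D. F x y m1 m3 b)"
    by (rule sum.swap)
  have 5: "\<And>b x. (\<Sum>y\<in>B. \<Sum>m1\<in>C. \<Sum>m3\<in>D. F x y m1 m3 b) = (\<Sum>m1\<in>C. \<Sum>y\<in>B. \<Sum>m3\<in>D. F x y m1 m3 b)"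
    by (rule sum.swap)
  have "(\<Sum>x\<in>A. \<Sum>y\<in>B. \<Sum>m1\<in>C. \<Sum>m3\<in>D. \<Sum>b\<in>S. F x y m1 m3 b) =
        (\<Sum>x\<in>A. \<Sum>y\<in>B. \<Sum>m1\<in>C. \<Sum>b\<in>S. \<Sum>m3\<in>D. F x y m1 m3 b)"
    by (rule sum.cong[OF refl], rule sum.cong[OF refl], rule sum.cong[OF refl], rule 1)
  also have "\<dots> = (\<Sum>x\<in>A. \<Sum>y\<in>B. \<Sum>b\<in>S. \<Sum>m1\<in>C. \<Sum>m3\<in>D. F x y m1 m3 b)"
    by (rule sum.cong[OF refl], rule sum.cong[OF refl], rule 2)
  also have "\<dots> = (\<Sum>x\<in>A. \<Sum>b\<in>S. \<Sum>y\<in>B. \<Sum>m1\<in>C. \<Sum>m3\<in>D. F x y m1 m3 b)"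
    by (rule sum.cong[OF refl], rule 3)
  also have "\<dots> = (\<Sum>b\<in>S. \<Sum>x\<in>A. \<Sum>y\<in>B. \<Sum>m1\<in>C. \<Sum>m3\<in>D. F x y m1 m3 b)"
    by (rule 4)
  also have "\<dots> = (\<Sum>b\<in>S. \<Sum>x\<in>A. \<Sum>m1\<in>C. \<Sum>y\<in>B. \<Sum>m3\<in>D. F x y m1 m3 b)"
    by (rule sum.cong[OF refl], rule sum.cong[OF refl], rule 5)
  finally show ?thesis .
qed

lemma sum_pairU: "(\<Sum>X\<in>(UNIV::('p::finite \<times> 'q::finite) set). f X) = (\<Sum>x\<in>UNIV. \<Sum>m\<in>UNIV. f (x, m))"
proof -
  have "(\<Sum>x\<in>UNIV. \<Sum>m\<in>UNIV. f (x, m)) = (\<Sum>(x, m)\<in>UNIV \<times> UNIV. f (x, m))"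
    by (rule sum.cartesian_product)
  also have "\<dots> = (\<Sum>X\<in>UNIV. f X)" by (simp add: case_prod_beta')
  finally show ?thesis by simp
qed

definition DD :: "'a::finite itself \<Rightarrow> 'b::finite itself \<Rightarrow> 'c::finite itself \<Rightarrow> complex" where
  "DD _ _ _ = complex_of_real (real (CARD('a) * CARD('b) * CARD('c)))"

lemma choi_pur:
  fixes U :: "complex^('a::finite \<times> 'b::finite \<times> 'c::finite)^('a \<times> 'b \<times> 'c)"
  shows "purity (sel6 K K') (choi_state U) = 1 / (DD TYPE('a) TYPE('b) TYPE('c) * DD TYPE('a) TYPE('b) TYPE('c)) *
    (\<Sum>x\<in>UNIV. \<Sum>m1\<in>UNIV. \<Sum>y\<in>UNIV. \<Sum>m3\<in>UNIV.
       Cf U K x y m1 (sel3 K' m3 m1) m3 (sel3 K' m1 m3))"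
proof -
  interpret selop "sel6 K K' :: (('a \<times> 'b \<times> 'c) \<times> ('a \<times> 'b \<times> 'c)) \<Rightarrow> _" by (rule selop_sel6)
  define s where "s = complex_of_real (sqrt (real (CARD('a) * CARD('b) * CARD('c))))"
  have cs: "cnj s = s" by (simp add: s_def)
  have ss: "s * s = DD TYPE('a) TYPE('b) TYPE('c)"
  proof -
    have "s * s = complex_of_real (sqrt (real (CARD('a) * CARD('b) * CARD('c))) * sqrt (real (CARD('a) * CARD('b) * CARD('c))))"
      by (simp only: s_def of_real_mult)
    also have "sqrt (real (CARD('a) * CARD('b) * CARD('c))) * sqrt (real (CARD('a) * CARD('b) * CARD('c))) = real (CARD('a) * CARD('b) * CARD('c))"
      by simp
    finally show ?thesis by (simp add: DD_def)
  qed
  have ch: "\<And>j j'. choi_state U (j, j') = U $ j $ j' / s" unfolding choi_state_def s_def by (simp only: case_prod_conv)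
  have "purity (sel6 K K') (choi_state U) = (\<Sum>x\<in>UNIV. \<Sum>m1\<in>UNIV. \<Sum>y\<in>UNIV. \<Sum>m3\<in>UNIV.
       (U$x$m1 / s) * cnj (U$(sel3 K y x)$(sel3 K' m3 m1) / s) * (U$y$m3 / s) * cnj (U$(sel3 K x y)$(sel3 K' m1 m3) / s))"
    unfolding purity_alt sum_pairU sel6.simps ch by (rule refl)
  also have "\<dots> = (\<Sum>x\<in>UNIV. \<Sum>m1\<in>UNIV. \<Sum>y\<in>UNIV. \<Sum>m3\<in>UNIV.
       1 / (s * s * (s * s)) * Cf U K x y m1 (sel3 K' m3 m1) m3 (sel3 K' m1 m3))"
    unfolding Cf_def by (intro sum.cong refl) (rule div4[OF cs])
  also have "\<dots> = 1 / (s * s * (s * s)) * (\<Sum>x\<in>UNIV. \<Sum>m1\<in>UNIV. \<Sum>y\<in>UNIV. \<Sum>m3\<in>UNIV.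
       Cf U K x y m1 (sel3 K' m3 m1) m3 (sel3 K' m1 m3))"
    by (simp only: sum_distrib_left)
  finally show ?thesis unfolding ss .
qed

lemma div3: "(x::complex) / a * (y / b * (z / c)) = 1 / (a * (b * c)) * (x * (y * z))"
  by (simp add: divide_inverse mult_ac inverse_mult_distrib)

context
  fixes M1 :: "(complex^'a::finite) measure" and M2 :: "(complex^'b::finite) measure"
    and M3 :: "(complex^'c::finite) measure"
  assumes U1: "unitarily_invariant_state_measure M1"
    and U2: "unitarily_invariant_state_measure M2"
    and U3: "unitarily_invariant_state_measure M3"
begin

lemma W_formula: "W M1 M2 M3 m1 m2 m3 m4 = 1 / (Dn CARD('a) * (Dn CARD('b) * Dn CARD('c))) *
   (\<Sum>B\<in>Pow {1,2,3::nat}. of_bool (m2 = sel3 ({1,2,3} - B) m3 m1 \<and> m4 = sel3 ({1,2,3} - B) m1 m3))"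
proof -
  obtain a1 b1 c1 where e1: "m1 = (a1, b1, c1)" by (cases m1) auto
  obtain a2 b2 c2 where e2: "m2 = (a2, b2, c2)" by (cases m2) auto
  obtain a3 b3 c3 where e3: "m3 = (a3, b3, c3)" by (cases m3) auto
  obtain a4 b4 c4 where e4: "m4 = (a4, b4, c4)" by (cases m4) auto
  have "W M1 M2 M3 m1 m2 m3 m4 =
     (of_bool (a1 = a2 \<and> a3 = a4) + of_bool (a1 = a4 \<and> a3 = a2)) / Dn CARD('a) *
     ((of_bool (b1 = b2 \<and> b3 = b4) + of_bool (b1 = b4 \<and> b3 = b2)) / Dn CARD('b) *
      ((of_bool (c1 = c2 \<and> c3 = c4) + of_bool (c1 = c4 \<and> c3 = c2)) / Dn CARD('c)))"
    unfolding W_def e1 e2 e3 e4 fst_conv snd_conv mom_formula[OF U1] mom_formula[OF U2] mom_formula[OF U3]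
      Dn_def by (rule refl)
  also have "\<dots> = 1 / (Dn CARD('a) * (Dn CARD('b) * Dn CARD('c))) *
     ((of_bool (a1 = a2 \<and> a3 = a4) + of_bool (a1 = a4 \<and> a3 = a2)) *
     ((of_bool (b1 = b2 \<and> b3 = b4) + of_bool (b1 = b4 \<and> b3 = b2)) *
      (of_bool (c1 = c2 \<and> c3 = c4) + of_bool (c1 = c4 \<and> c3 = c2))))"
    by (rule div3)
  also have "\<dots> = 1 / (Dn CARD('a) * (Dn CARD('b) * Dn CARD('c))) *
   (\<Sum>B\<in>Pow {1,2,3::nat}. of_bool (m2 = sel3 ({1,2,3} - B) m3 m1 \<and> m4 = sel3 ({1,2,3} - B) m1 m3))"
    unfolding delta3 e1 e2 e3 e4 by (rule refl)
  finally show ?thesis .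
qed

lemma E_main: "integral\<^sup>L (M1 \<Otimes>\<^sub>M (M2 \<Otimes>\<^sub>M M3)) (Pexp U K) =
  1 / (Dn CARD('a) * (Dn CARD('b) * Dn CARD('c))) *
  (\<Sum>B\<in>Pow {1,2,3::nat}. \<Sum>x\<in>UNIV. \<Sum>m1\<in>UNIV. \<Sum>y\<in>UNIV. \<Sum>m3\<in>UNIV.
     Cf U K x y m1 (sel3 ({1,2,3} - B) m3 m1) m3 (sel3 ({1,2,3} - B) m1 m3))"
proof -
  let ?cc = "1 / (Dn CARD('a) * (Dn CARD('b) * Dn CARD('c)))"
  have inner: "\<And>x y m1 m3. (\<Sum>m2\<in>UNIV. \<Sum>m4\<in>UNIV. Cf U K x y m1 m2 m3 m4 * W M1 M2 M3 m1 m2 m3 m4) =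
     ?cc * (\<Sum>B\<in>Pow {1,2,3::nat}. Cf U K x y m1 (sel3 ({1,2,3} - B) m3 m1) m3 (sel3 ({1,2,3} - B) m1 m3))"
    unfolding W_formula by (rule sum_delta2) simp
  have "integral\<^sup>L (M1 \<Otimes>\<^sub>M (M2 \<Otimes>\<^sub>M M3)) (Pexp U K) =
    (\<Sum>x\<in>UNIV. \<Sum>y\<in>UNIV. \<Sum>m1\<in>UNIV. \<Sum>m3\<in>UNIV.
     ?cc * (\<Sum>B\<in>Pow {1,2,3::nat}. Cf U K x y m1 (sel3 ({1,2,3} - B) m3 m1) m3 (sel3 ({1,2,3} - B) m1 m3)))"
    unfolding E_Pexp[OF U1 U2 U3] inner by (rule refl)
  also have "\<dots> = ?cc * (\<Sum>x\<in>UNIV. \<Sum>y\<in>UNIV. \<Sum>m1\<in>UNIV. \<Sum>m3\<in>UNIV.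
     \<Sum>B\<in>Pow {1,2,3::nat}. Cf U K x y m1 (sel3 ({1,2,3} - B) m3 m1) m3 (sel3 ({1,2,3} - B) m1 m3))"
    by (simp only: sum_distrib_left)
  also have "\<dots> = ?cc * (\<Sum>B\<in>Pow {1,2,3::nat}. \<Sum>x\<in>UNIV. \<Sum>m1\<in>UNIV. \<Sum>y\<in>UNIV. \<Sum>m3\<in>UNIV.
     Cf U K x y m1 (sel3 ({1,2,3} - B) m3 m1) m3 (sel3 ({1,2,3} - B) m1 m3))"
    by (subst swap5) (rule refl)
  finally show ?thesis .
qed

end

lemma tauInt: "(\<lambda>(\<psi>1, \<psi>2, \<psi>3). tau g (apply_prod U \<psi>1 \<psi>2 \<psi>3)) =
   (\<lambda>p. 2 * (1 - Re (Pexp U ({1,2,3} - g) p)))"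
proof (rule ext)
  fix p :: "(complex^'a::finite) \<times> (complex^'b::finite) \<times> (complex^'c::finite)"
  obtain x y z where p: "p = (x, y, z)" by (cases p) auto
  show "(case p of (\<psi>1, \<psi>2, \<psi>3) \<Rightarrow> tau g (apply_prod U \<psi>1 \<psi>2 \<psi>3)) = 2 * (1 - Re (Pexp U ({1,2,3} - g) p))"
    unfolding p by (simp add: tau_def pur_exp)
qed

lemma otInt: "(\<lambda>(\<psi>1, \<psi>2, \<psi>3). one_tangle (apply_prod U \<psi>1 \<psi>2 \<psi>3)) =
   (\<lambda>p. ((\<lambda>(\<psi>1, \<psi>2, \<psi>3). tau {1,2} (apply_prod U \<psi>1 \<psi>2 \<psi>3)) p
        + (\<lambda>(\<psi>1, \<psi>2, \<psi>3). tau {1,3} (apply_prod U \<psi>1 \<psi>2 \<psi>3)) p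
        + (\<lambda>(\<psi>1, \<psi>2, \<psi>3). tau {2,3} (apply_prod U \<psi>1 \<psi>2 \<psi>3)) p) / 3)"
  by (rule ext) (simp add: one_tangle_def split: prod.splits)

lemma real_id:
  fixes a b c :: real assumes "a > 0" "b > 0" "c > 0"
  shows "1 / (a * (a + 1) * (b * (b + 1) * (c * (c + 1)))) * (a * b * c) * (a * b * c) =
     a / (a + 1) * (b / (b + 1)) * (c / (c + 1))"
proof -
  have n: "a + 1 \<noteq> 0" "b + 1 \<noteq> 0" "c + 1 \<noteq> 0" "a \<noteq> 0" "b \<noteq> 0" "c \<noteq> 0" using assms by auto
  show ?thesis using n by (simp add: divide_simps)
qed

lemma ccDD: "1 / (Dn CARD('a::finite) * (Dn CARD('b::finite) * Dn CARD('c::finite))) * DD TYPE('a) TYPE('b) TYPE('c) * DD TYPE('a) TYPE('b) TYPE('c)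
   = complex_of_real (real CARD('a) / (real CARD('a) + 1) * (real CARD('b) / (real CARD('b) + 1)) * (real CARD('c) / (real CARD('c) + 1)))"
proof -
  have Dn_real: "\<And>d. Dn d = complex_of_real (real d * (real d + 1))" by (simp add: Dn_def)
  have DDr: "DD TYPE('a) TYPE('b) TYPE('c) = complex_of_real (real CARD('a) * real CARD('b) * real CARD('c))"
    by (simp add: DD_def)
  have pos: "real CARD('a) > 0" "real CARD('b) > 0" "real CARD('c) > 0" by (simp_all add: card_gt_0_iff)
  have "1 / (Dn CARD('a) * (Dn CARD('b) * Dn CARD('c))) * DD TYPE('a) TYPE('b) TYPE('c) * DD TYPE('a) TYPE('b) TYPE('c)
    = complex_of_real (1 / (real CARD('a) * (real CARD('a) + 1) * (real CARD('b) * (real CARD('b) + 1) * (real CARD('c) * (real CARD('c) + 1)))) * (real CARD('a) * real CARD('b) * real CARD('c)) * (real CARD('a) * real CARD('b) * real CARD('c)))"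
    unfolding Dn_real DDr by simp
  then show ?thesis unfolding real_id[OF pos] .
qed

lemma DD_nz: "DD TYPE('a::finite) TYPE('b::finite) TYPE('c::finite) \<noteq> 0"
  by (simp add: DD_def card_gt_0_iff)

context
  fixes M1 :: "(complex^'a::finite) measure" and M2 :: "(complex^'b::finite) measure"
    and M3 :: "(complex^'c::finite) measure"
  assumes U1: "unitarily_invariant_state_measure M1"
    and U2: "unitarily_invariant_state_measure M2"
    and U3: "unitarily_invariant_state_measure M3"
begin

lemma probP: "prob_space (M1 \<Otimes>\<^sub>M (M2 \<Otimes>\<^sub>M M3))"
  using goodP[OF U1 U2 U3] by (simp add: good_def)

lemma T_int: "integrable (M1 \<Otimes>\<^sub>M (M2 \<Otimes>\<^sub>M M3)) (\<lambda>p. 2 * (1 - Re (Pexp U K p)))"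
  by (rule good_integrable[OF goodP[OF U1 U2 U3]])
     (intro continuous_intros continuous_on_compose2[OF Pexp_cont], auto)

lemma P_int: "integrable (M1 \<Otimes>\<^sub>M (M2 \<Otimes>\<^sub>M M3)) (Pexp U K)"
  by (rule good_integrable[OF goodP[OF U1 U2 U3] Pexp_cont])

lemma ent_eq: "ent_power M1 M2 M3 g U = 2 * (1 - Re (integral\<^sup>L (M1 \<Otimes>\<^sub>M (M2 \<Otimes>\<^sub>M M3)) (Pexp U ({1,2,3} - g))))"
proof -
  have p: "prob_space (M1 \<Otimes>\<^sub>M (M2 \<Otimes>\<^sub>M M3))" by (rule probP)
  have "ent_power M1 M2 M3 g U = integral\<^sup>L (M1 \<Otimes>\<^sub>M (M2 \<Otimes>\<^sub>M M3)) (\<lambda>p. 2 * (1 - Re (Pexp U ({1,2,3} - g) p)))"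
    unfolding ent_power_def tauInt by (rule refl)
  also have "\<dots> = 2 * (integral\<^sup>L (M1 \<Otimes>\<^sub>M (M2 \<Otimes>\<^sub>M M3)) (\<lambda>p. 1) -
                       integral\<^sup>L (M1 \<Otimes>\<^sub>M (M2 \<Otimes>\<^sub>M M3)) (\<lambda>p. Re (Pexp U ({1,2,3} - g) p)))"
  proof -
    have iR: "integrable (M1 \<Otimes>\<^sub>M (M2 \<Otimes>\<^sub>M M3)) (\<lambda>p. Re (Pexp U ({1,2,3} - g) p))"
      using P_int by (rule integrable_Re)
    have i1: "integrable (M1 \<Otimes>\<^sub>M (M2 \<Otimes>\<^sub>M M3)) (\<lambda>p. 1::real)"
      using p by (simp add: prob_space.finite_measure finite_measure.integrable_const)
    show ?thesis unfolding integral_mult_right_zero Bochner_Integration.integral_diff[OF i1 iR] by (rule refl)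
  qed
  also have "\<dots> = 2 * (1 - Re (integral\<^sup>L (M1 \<Otimes>\<^sub>M (M2 \<Otimes>\<^sub>M M3)) (Pexp U ({1,2,3} - g))))"
  proof -
    have "integral\<^sup>L (M1 \<Otimes>\<^sub>M (M2 \<Otimes>\<^sub>M M3)) (\<lambda>p. 1::real) = 1"
      using p by (simp add: prob_space.prob_space)
    then show ?thesis using integral_Re[OF P_int] by simp
  qed
  finally show ?thesis .
qed

lemma ent_val: "ent_power M1 M2 M3 g U =
   2 * (1 - (real CARD('a) / (real CARD('a) + 1)) * (real CARD('b) / (real CARD('b) + 1))
            * (real CARD('c) / (real CARD('c) + 1))
          * (\<Sum>x' \<in> Pow {1,2,3}. Re (purity (sel6 ({1,2,3} - g) ({1,2,3} - x')) (choi_state U))))"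
proof -
  let ?D = "DD TYPE('a) TYPE('b) TYPE('c)"
  let ?r = "real CARD('a) / (real CARD('a) + 1) * (real CARD('b) / (real CARD('b) + 1)) * (real CARD('c) / (real CARD('c) + 1))"
  have S: "\<And>B. (\<Sum>x\<in>UNIV. \<Sum>m1\<in>UNIV. \<Sum>y\<in>UNIV. \<Sum>m3\<in>UNIV.
     Cf U ({1,2,3} - g) x y m1 (sel3 ({1,2,3} - B) m3 m1) m3 (sel3 ({1,2,3} - B) m1 m3))
     = ?D * ?D * purity (sel6 ({1,2,3} - g) ({1,2,3} - B)) (choi_state U)"
    unfolding choi_pur using DD_nz[where 'a='a and 'b='b and 'c='c] by simp
  have "integral\<^sup>L (M1 \<Otimes>\<^sub>M (M2 \<Otimes>\<^sub>M M3)) (Pexp U ({1,2,3} - g)) =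
     1 / (Dn CARD('a) * (Dn CARD('b) * Dn CARD('c))) *
     (\<Sum>B\<in>Pow {1,2,3::nat}. ?D * ?D * purity (sel6 ({1,2,3} - g) ({1,2,3} - B)) (choi_state U))"
    unfolding E_main[OF U1 U2 U3] S by (rule refl)
  also have "\<dots> = (1 / (Dn CARD('a) * (Dn CARD('b) * Dn CARD('c))) * ?D * ?D) *
     (\<Sum>B\<in>Pow {1,2,3::nat}. purity (sel6 ({1,2,3} - g) ({1,2,3} - B)) (choi_state U))"
    unfolding sum_distrib_left[symmetric] by (simp only: mult.assoc)
  also have "\<dots> = complex_of_real ?r *
     (\<Sum>B\<in>Pow {1,2,3::nat}. purity (sel6 ({1,2,3} - g) ({1,2,3} - B)) (choi_state U))"
    unfolding ccDD by (rule refl)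
  finally have E: "integral\<^sup>L (M1 \<Otimes>\<^sub>M (M2 \<Otimes>\<^sub>M M3)) (Pexp U ({1,2,3} - g)) = complex_of_real ?r *
     (\<Sum>B\<in>Pow {1,2,3::nat}. purity (sel6 ({1,2,3} - g) ({1,2,3} - B)) (choi_state U))" .
  have R: "\<And>r z. Re (complex_of_real r * z) = r * Re z" by simp
  show ?thesis unfolding ent_eq E R Re_sum by (rule refl)
qed

lemma ent1_val: "ent_power1 M1 M2 M3 U =
  (ent_power M1 M2 M3 {1,2} U + ent_power M1 M2 M3 {1,3} U + ent_power M1 M2 M3 {2,3} U) / 3"
proof -
  have i: "\<And>g. integrable (M1 \<Otimes>\<^sub>M (M2 \<Otimes>\<^sub>M M3)) (\<lambda>(\<psi>1, \<psi>2, \<psi>3). tau g (apply_prod U \<psi>1 \<psi>2 \<psi>3))"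
    unfolding tauInt by (rule T_int)
  show ?thesis
    unfolding ent_power1_def otInt ent_power_def integral_divide_zero
    by (subst Bochner_Integration.integral_add[OF Bochner_Integration.integrable_add[OF i i] i],
        subst Bochner_Integration.integral_add[OF i i], rule refl)
qed

end

theorem theorem1:
  fixes U :: "complex^('a::finite \<times> 'b::finite \<times> 'c::finite)^('a \<times> 'b \<times> 'c)"
    and M1 :: "(complex^'a) measure" and M2 :: "(complex^'b) measure"
    and M3 :: "(complex^'c) measure"
  assumes "special_unitary U"
    and "unitarily_invariant_state_measure M1"
    and "unitarily_invariant_state_measure M2"
    and "unitarily_invariant_state_measure M3"
  shows "ent_power1 M1 M2 M3 U =
           (ent_power M1 M2 M3 {1,2} U + ent_power M1 M2 M3 {1,3} U
             + ent_power M1 M2 M3 {2,3} U) / 3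
         \<and> (\<forall>g \<in> {{1,2}, {1,3}, {2,3}}.
              ent_power M1 M2 M3 g U =
                2 * (1 - (real CARD('a) / (real CARD('a) + 1)) * (real CARD('b) / (real CARD('b) + 1))
                           * (real CARD('c) / (real CARD('c) + 1))
                         * (\<Sum>x' \<in> Pow {1,2,3}.
                              Re (purity (sel6 ({1,2,3} - g) ({1,2,3} - x')) (choi_state U)))))"
  using ent1_val[OF assms(2,3,4)] ent_val[OF assms(2,3,4)] by blast

end
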